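(* For every $i$ (indices mod $8g-4$), $T_{\sigma(i)+1}T_i=T_{\sigma(i-1)-1}T_{i-1}$.
   Context: Fix $g\ge 2$. Let $\mathcal F$ be the regular hyperbolic $(8g-4)$-gon in the unit disk centered at $0$ with all interior angles $\pi/2$, sides labeled $1,\dots,8g-4$ counterclockwise, vertex $V_i$ the common endpoint of sides $i-1$ and $i$; indices mod $8g-4$. Let $\sigma(i)=4g-i$ for odd $i$, $\sigma(i)=2-i$ for even $i$, and $\rho(i)=\sigma(i)+1$. $T_i$ is the Möbius transformation mapping side $i$ onto side $\sigma(i)$ (its isometric circle contains side $i$); these generators satisfy $T_{\sigma(i)}T_i=\mathrm{Id}$, $T_i(V_i)=V_{\rho(i)}$, and $T_{\rho^3(i)}T_{\rho^2(i)}T_{\rho(i)}T_i=\mathrm{Id}$ for all $i$. *)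

theory Defs
  imports "HOL-Analysis.Analysis"
begin

definition nsides :: "nat \<Rightarrow> int" where
  "nsides g = 8 * int g - 4"

definition idx :: "nat \<Rightarrow> int \<Rightarrow> int" where
  "idx g i = (i - 1) mod nsides g + 1"

(* Side pairing sigma (on reduced indices; parity is well defined since N is even). *)
definition sigma :: "nat \<Rightarrow> int \<Rightarrow> int" where
  "sigma g i = (let j = idx g i in idx g (if odd j then 4 * int g - j else 2 - j))"

definition rho :: "nat \<Rightarrow> int \<Rightarrow> int" where
  "rho g i = idx g (sigma g i + 1)"

(* Geometry of the regular N-gon centred at 0 with interior angles pi/2.
   Convention (rotation of the polygon): the midpoint of side i lies on the ray of
   angle alpha_i = 2 pi i / N, so V_i (common endpoint of sides i-1 and i) lies on
   the ray of angle alpha_i - pi/N.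
   If a is the hyperbolic distance from 0 to the midpoint of a side, the right
   triangle (centre, side midpoint, vertex) with angles pi/N and pi/4 gives
   cosh a = cos(pi/4) / sin(pi/N). *)
definition side_angle :: "nat \<Rightarrow> int \<Rightarrow> real" where
  "side_angle g i = 2 * pi * real_of_int (idx g i) / real_of_int (nsides g)"

definition mid_dist :: "nat \<Rightarrow> real" where
  "mid_dist g = arcosh (cos (pi / 4) / sin (pi / real_of_int (nsides g)))"

(* hyperbolic translation along the real axis carrying the side with midpoint
   tanh(a/2) (on the positive real axis) onto the side with midpoint -tanh(a/2);
   its isometric circle is the geodesic containing the first side. *)
definition transl :: "real \<Rightarrow> complex \<Rightarrow> complex" where
  "transl t z = (z - complex_of_real t) / (1 - complex_of_real t * z)"

(* T_i : the Moebius transformation mapping side i onto side sigma(i), with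
   isometric circle containing side i (so T_i(V_i) = V_rho(i)):
   rotate side i to the positive real axis, translate, rotate to side sigma(i). *)
definition Tgen :: "nat \<Rightarrow> int \<Rightarrow> complex \<Rightarrow> complex" where
  "Tgen g i z =
     cis (side_angle g (sigma g i) + pi) *
       transl (tanh (mid_dist g)) (cis (- side_angle g i) * z)"

end

theory Submission
  imports Defs
begin

lemma nsides_ge: "g \<ge> 2 \<Longrightarrow> nsides g \<ge> 12"
  unfolding nsides_def by simp

lemma tanh_sq:
  assumes g: "g \<ge> 2"
  shows "(tanh (mid_dist g))^2 = cos (2*pi / real_of_int (nsides g))"
proof -
  define n where "n = real_of_int (nsides g)"
  have n12: "n \<ge> 12" using nsides_ge[OF g] unfolding n_def by simp
  define s where "s = sin (pi / n)"
  have pn: "0 < pi / n" "pi / n \<le> pi/4" using n12 pi_gt_zero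
    by (auto simp: field_simps)
  have s0: "s > 0" unfolding s_def using pn using pi_gt_zero by (intro sin_gt_zero) linarith+
  have s1: "s \<le> sqrt 2 / 2" unfolding s_def sin_45[symmetric]
    using pn by (intro sin_monotone_2pi_le) auto
  define x where "x = cos (pi/4) / s"
  have x1: "x \<ge> 1" unfolding x_def cos_45 using s0 s1 by simp
  have ch: "cosh (mid_dist g) = x" unfolding mid_dist_def x_def s_def n_def[symmetric]
    using x1 unfolding x_def s_def by simp
  have "(tanh (mid_dist g))^2 = (sinh (mid_dist g))^2 / (cosh (mid_dist g))^2"
    unfolding tanh_def by (simp add: power_divide)
  also have "\<dots> = (x^2 - 1) / x^2" using ch by (simp add: sinh_square_eq)
  also have "\<dots> = 1 - 2 * s^2"
  proof -
    have "x^2 = 1 / (2 * s^2)" unfolding x_def cos_45 using s0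
      by (simp add: power_divide)
    moreover have "x^2 > 0" using x1 by simp
    ultimately show ?thesis using s0 by (simp add: field_simps)
  qed
  also have "\<dots> = cos (2*pi/n)" unfolding s_def using cos_double_sin[of "pi/n"] by simp
  finally show ?thesis unfolding n_def .
qed

lemma transl_disk:
  fixes t :: real and w :: complex
  assumes "\<bar>t\<bar> < 1" "norm w < 1"
  shows "norm (transl t w) < 1" "1 - complex_of_real t * w \<noteq> 0"
proof -
  obtain x y where w: "w = Complex x y" by (cases w)
  have xy: "x^2 + y^2 < 1" using assms(2) unfolding w cmod_def
    by (simp add: real_sqrt_less_iff)
  have t2: "t^2 < 1" using assms(1) by (simp add: abs_square_less_1)
  have key: "(x-t)^2 + y^2 < (1-t*x)^2 + (t*y)^2"
  proof -
    have "(1-t*x)^2 + (t*y)^2 - ((x-t)^2 + y^2) = (1-t^2)*(1-(x^2+y^2))"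
      by (simp add: power2_eq_square algebra_simps)
    moreover have "(1-t^2)*(1-(x^2+y^2)) > 0" using xy t2 by simp
    ultimately show ?thesis by linarith
  qed
  have nz: "(1-t*x)^2 + (t*y)^2 > 0" using key by (smt (verit) zero_le_power2)
  have d: "1 - complex_of_real t * w = Complex (1-t*x) (-(t*y))" unfolding w
    by (simp add: complex_eq_iff)
  show "1 - complex_of_real t * w \<noteq> 0" unfolding d using nz
    by (auto simp: complex_eq_iff)
  have "norm (w - complex_of_real t) < norm (1 - complex_of_real t * w)"
    unfolding d using key unfolding w cmod_def
    by (simp add: real_sqrt_less_iff)
  then show "norm (transl t w) < 1" unfolding transl_def
    by (simp add: norm_divide divide_less_eq)
qed
definition SS :: "nat \<Rightarrow> int \<Rightarrow> int" where
  "SS g x = (if odd x then 4 * int g - x else 2 - x)"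

definition EE :: "nat \<Rightarrow> int \<Rightarrow> complex" where
  "EE g x = cis (2 * pi * real_of_int x / real_of_int (nsides g))"

lemma nsides_even: "even (nsides g)"
  unfolding nsides_def by presburger

lemma idx_dvd: "nsides g dvd (idx g x - x)"
proof -
  have "idx g x - x = nsides g * (- ((x - 1) div nsides g))"
    using mult_div_mod_eq[of "nsides g" "x - 1"] unfolding idx_def by linarith
  then show ?thesis by (metis dvdI)
qed

lemma dvd_parity: "nsides g dvd (a - b) \<Longrightarrow> odd a = odd b"
proof -
  assume "nsides g dvd (a - b)"
  then obtain k where k: "a - b = nsides g * k" by blast
  have "even (nsides g * k)" using nsides_even[of g] by simp
  moreover have "a = b + nsides g * k" using k by simp
  ultimately show ?thesis by simp
qed

lemma SS_cong: "nsides g dvd (a - b) \<Longrightarrow> nsides g dvd (SS g a - SS g b)"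
proof -
  assume h: "nsides g dvd (a - b)"
  then have p: "odd a = odd b" by (rule dvd_parity)
  have "SS g a - SS g b = -(a - b)" unfolding SS_def using p by auto
  then show ?thesis using h by (metis dvd_minus_iff)
qed

lemma sigma_cong: "nsides g dvd (sigma g x - SS g x)"
proof -
  have "sigma g x = idx g (SS g (idx g x))" unfolding sigma_def SS_def Let_def by simp
  moreover have "nsides g dvd (idx g (SS g (idx g x)) - SS g (idx g x))" by (rule idx_dvd)
  moreover have "nsides g dvd (SS g (idx g x) - SS g x)" by (rule SS_cong[OF idx_dvd])
  ultimately show ?thesis using dvd_add by fastforce
qed

lemma key_cong: "nsides g dvd (sigma g (sigma g i + 1) - (sigma g (sigma g (i - 1) - 1) - 1))"
proof -
  let ?n = "nsides g"
  have a: "?n dvd (sigma g (sigma g i + 1) - SS g (SS g i + 1))"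
  proof -
    have "?n dvd ((sigma g i + 1) - (SS g i + 1))" using sigma_cong[of g i] by simp
    then have "?n dvd (SS g (sigma g i + 1) - SS g (SS g i + 1))" by (rule SS_cong)
    then show ?thesis using sigma_cong[of g "sigma g i + 1"] using dvd_add by fastforce
  qed
  have b: "?n dvd (sigma g (sigma g (i - 1) - 1) - SS g (SS g (i - 1) - 1))"
  proof -
    have "?n dvd ((sigma g (i - 1) - 1) - (SS g (i - 1) - 1))" using sigma_cong[of g "i - 1"] by simp
    then have "?n dvd (SS g (sigma g (i - 1) - 1) - SS g (SS g (i - 1) - 1))" by (rule SS_cong)
    then show ?thesis using sigma_cong[of g "sigma g (i - 1) - 1"] using dvd_add by fastforce
  qed
  have c: "?n dvd (SS g (SS g i + 1) - (SS g (SS g (i - 1) - 1) - 1))"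
  proof (cases "odd i")
    case True
    have p: "odd (4 * int g - i)" "\<not> odd (4 * int g - i + 1)" "\<not> odd (i - 1)" "odd (2 - (i - 1) - 1)"
      using True by presburger+
    have "SS g (SS g i + 1) - (SS g (SS g (i - 1) - 1) - 1) = - ?n"
      unfolding nsides_def SS_def using True p by simp
    then show ?thesis by simp
  next
    case False
    have p: "\<not> odd (2 - i)" "odd (2 - i + 1)" "odd (i - 1)" "\<not> odd (4 * int g - (i - 1) - 1)"
      using False by presburger+
    have "SS g (SS g i + 1) - (SS g (SS g (i - 1) - 1) - 1) = ?n"
      unfolding nsides_def SS_def using False p by simp
    then show ?thesis by simp
  qed
  have "sigma g (sigma g i + 1) - (sigma g (sigma g (i - 1) - 1) - 1)
     = (sigma g (sigma g i + 1) - SS g (SS g i + 1)) - (sigma g (sigma g (i - 1) - 1) - SS g (SS g (i - 1) - 1))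
       + (SS g (SS g i + 1) - (SS g (SS g (i - 1) - 1) - 1))" by simp
  then show ?thesis using a b c by (metis dvd_add dvd_diff)
qed

lemma EE_add: "EE g (a + b) = EE g a * EE g b"
  unfolding EE_def cis_mult by (simp add: add_divide_distrib distrib_left)

lemma EE_cong: assumes "g \<ge> 2" "nsides g dvd (a - b)" shows "EE g a = EE g b"
proof -
  obtain k where k: "a - b = nsides g * k" using assms(2) by blast
  have n0: "real_of_int (nsides g) \<noteq> 0" using assms(1) unfolding nsides_def by simp
  have "a = b + nsides g * k" using k by simp
  then have "EE g a = EE g b * cis (2 * pi * real_of_int k)"
    unfolding EE_def cis_mult using n0 by (simp add: field_simps)
  also have "cis (2 * pi * real_of_int k) = 1" by (rule cis_multiple_2pi) simp
  finally show ?thesis by simp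
qed

lemma side_EE: assumes "g \<ge> 2" shows "cis (side_angle g x) = EE g x"
proof -
  have "cis (side_angle g x) = EE g (idx g x)" unfolding side_angle_def EE_def by simp
  also have "\<dots> = EE g x" using EE_cong[OF assms idx_dvd] .
  finally show ?thesis .
qed
lemma core0:
  fixes t a b w u :: complex
  assumes tt: "2*w*t^2 = w^2 + 1"
  and ha: "a*(1-t*u) = u - t" and hb: "b*(1 - t*w*u) = w*u - t"
  and d1: "1 - t*u \<noteq> 0" and d2: "1 - t*w*u \<noteq> 0"
  shows "(-a - t*w)*(1+t*w*b) = w*(-w*b-t)*(w+t*a)"
proof -
  have "((-a - t*w)*(1+t*w*b) - w*(-w*b-t)*(w+t*a)) * ((1-t*u)*(1 - t*w*u)) = 0"
    using tt ha hb by algebra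
  then show ?thesis using d1 d2 by simp
qed

lemma core:
  fixes t :: real and w u :: complex
  assumes t1: "\<bar>t\<bar> < 1" and u1: "norm u < 1" and w1: "norm w = 1"
    and tt: "2*w*(complex_of_real t)^2 = w^2 + 1"
  shows "transl t (-(transl t u)/w) = w * transl t (-w * transl t (w*u))"
proof -
  define a where "a = transl t u"
  define b where "b = transl t (w*u)"
  have wu: "norm (w*u) < 1" using u1 w1 by (simp add: norm_mult)
  have w0: "w \<noteq> 0" using w1 by auto
  have d1: "1 - complex_of_real t * u \<noteq> 0" using transl_disk[OF t1 u1] by simp
  have d2: "1 - complex_of_real t * w * u \<noteq> 0" using transl_disk[OF t1 wu] by (simp add: mult.assoc)
  have a1: "norm a < 1" unfolding a_def using transl_disk[OF t1 u1] by simp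
  have b1: "norm b < 1" unfolding b_def using transl_disk[OF t1 wu] by simp
  have ha: "a*(1-complex_of_real t*u) = u - complex_of_real t" unfolding a_def transl_def using d1 by simp
  have hb: "b*(1-complex_of_real t*w*u) = w*u - complex_of_real t" unfolding b_def transl_def using d2
    by (simp add: mult.assoc)
  have ta: "norm (complex_of_real t * a) < 1" using t1 a1
    using mult_strict_mono'[of "\<bar>t\<bar>" 1 "norm a" 1] by (simp add: norm_mult)
  have tb: "norm (complex_of_real t * w * b) < 1" using t1 b1 w1
    using mult_strict_mono'[of "\<bar>t\<bar>" 1 "norm b" 1] by (simp add: norm_mult)
  have n1: "w + complex_of_real t * a \<noteq> 0"
  proof
    assume "w + complex_of_real t * a = 0"
    then have "w = - (complex_of_real t * a)" by (simp add: eq_neg_iff_add_eq_0)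
    then show False using ta w1 by simp
  qed
  have n2: "1 + complex_of_real t * w * b \<noteq> 0"
  proof
    assume "1 + complex_of_real t * w * b = 0"
    then have "1 = - (complex_of_real t * w * b)" by (simp add: eq_neg_iff_add_eq_0)
    then have "norm (complex_of_real t * w * b) = 1" by (metis norm_minus_cancel norm_one)
    then show False using tb by simp
  qed
  have K: "(-a - complex_of_real t*w)*(1+complex_of_real t*w*b) = w*(-w*b-complex_of_real t)*(w+complex_of_real t*a)"
    by (rule core0[OF tt ha hb d1 d2])
  have L: "transl t (-a/w) = (-a - complex_of_real t*w)/(w+complex_of_real t*a)"
  proof -
    have x1: "-a/w - complex_of_real t = (-a - complex_of_real t*w)/w" using w0 by (simp add: field_simps)
    have x2: "1 - complex_of_real t * (-a/w) = (w + complex_of_real t*a)/w" using w0 by (simp add: field_simps)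
    show ?thesis unfolding transl_def x1 x2 using w0 by simp
  qed
  have R: "w * transl t (-w * b) = w*(-w*b-complex_of_real t)/(1+complex_of_real t*w*b)"
    unfolding transl_def by (simp add: field_simps)
  have "transl t (-a/w) = w * transl t (-w * b)"
    unfolding L R using n1 n2 K by (simp add: divide_eq_eq eq_divide_eq field_simps)
  then show ?thesis unfolding a_def b_def .
qed

theorem lemma3p2:
  fixes g :: nat and i :: int and z :: complex
  assumes g: "g \<ge> 2" and z1: "norm z < 1"
  shows "Tgen g (sigma g i + 1) (Tgen g i z) = Tgen g (sigma g (i - 1) - 1) (Tgen g (i - 1) z)"
proof -
  define t where "t = tanh (mid_dist g)"
  define w where "w = EE g 1"
  define \<theta> where "\<theta> = 2 * pi / real_of_int (nsides g)"
  have wc: "w = cis \<theta>" unfolding w_def EE_def \<theta>_def by simp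
  have t1: "\<bar>t\<bar> < 1" unfolding t_def using tanh_real_bounds[of "mid_dist g"] by auto
  have w1: "norm w = 1" unfolding wc by simp
  have t2: "t^2 = cos \<theta>" unfolding t_def \<theta>_def by (rule tanh_sq[OF g])
  have tt: "2*w*(complex_of_real t)^2 = w^2 + 1"
  proof -
    have "(complex_of_real t)^2 = complex_of_real (cos \<theta>)" using arg_cong[OF t2, of complex_of_real] by simp
    moreover have "w^2 = cis (2*\<theta>)" unfolding wc by (simp add: power2_eq_square cis_mult)
    ultimately show ?thesis unfolding wc
      by (simp add: complex_eq_iff cos_double_cos sin_double power2_eq_square)
  qed
  have EEnz: "\<And>x. EE g x \<noteq> 0" unfolding EE_def by simp
  have EEn: "\<And>x. norm (EE g x) = 1" unfolding EE_def by simp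
  have Tg: "\<And>j y. Tgen g j y = - EE g (sigma g j) * transl t (y / EE g j)"
  proof -
    fix j y
    have "cis (side_angle g (sigma g j) + pi) = - cis (side_angle g (sigma g j))"
      using cis_mult[of "side_angle g (sigma g j)" pi] by simp
    moreover have "cis (- side_angle g j) * y = y / cis (side_angle g j)"
      by (simp add: divide_inverse mult.commute)
    ultimately show "Tgen g j y = - EE g (sigma g j) * transl t (y / EE g j)"
      unfolding Tgen_def t_def by (simp add: side_EE[OF g])
  qed
  define u where "u = z / EE g i"
  have u1: "norm u < 1" unfolding u_def using z1 EEn by (simp add: norm_divide)
  have e1: "EE g (sigma g i + 1) = EE g (sigma g i) * w" unfolding w_def by (rule EE_add)
  have e2: "EE g i = EE g (i - 1) * w" unfolding w_def using EE_add[of g "i - 1" 1] by simp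
  have e3: "EE g (sigma g (i - 1)) = EE g (sigma g (i - 1) - 1) * w"
    unfolding w_def using EE_add[of g "sigma g (i - 1) - 1" 1] by simp
  have e4: "EE g (sigma g (sigma g (i - 1) - 1)) = EE g (sigma g (sigma g i + 1)) * w"
  proof -
    have "EE g (sigma g (sigma g i + 1)) = EE g (sigma g (sigma g (i - 1) - 1) - 1)"
      by (rule EE_cong[OF g key_cong])
    then show ?thesis unfolding w_def using EE_add[of g "sigma g (sigma g (i - 1) - 1) - 1" 1] by simp
  qed
  have w0: "w \<noteq> 0" using w1 by auto
  have LHS: "Tgen g (sigma g i + 1) (Tgen g i z) = - EE g (sigma g (sigma g i + 1)) * transl t (-(transl t u)/w)"
  proof -
    have "Tgen g i z / EE g (sigma g i + 1) = -(transl t u)/w"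
      unfolding Tg[of i z] e1 u_def using EEnz[of "sigma g i"] w0 by (simp add: field_simps)
    then show ?thesis unfolding Tg[of "sigma g i + 1"] by simp
  qed
  have RHS: "Tgen g (sigma g (i - 1) - 1) (Tgen g (i - 1) z) = - (EE g (sigma g (sigma g i + 1)) * w) * transl t (-w * transl t (w*u))"
  proof -
    have zz: "z / EE g (i - 1) = w * u" unfolding u_def e2 using EEnz[of "i - 1"] w0 by (simp add: field_simps)
    have "Tgen g (i - 1) z / EE g (sigma g (i - 1) - 1) = -w * transl t (w*u)"
      unfolding Tg[of "i - 1" z] zz e3 using EEnz[of "sigma g (i - 1) - 1"] w0 by (simp add: field_simps)
    then show ?thesis unfolding Tg[of "sigma g (i - 1) - 1"] e4 by simp
  qed
  show ?thesis unfolding LHS RHS core[OF t1 u1 w1 tt] by simp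
qed

end
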